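(* Let $0<r<1$, let $R:=\{z\in\mathbb{C}:\frac{1+3r}{4}\le|z|\le\frac{1+r}{2}\}$, and let $X$ be the family of circles centered at $0$ contained in $R$. For $f\in\mathcal{A}_r$ put $$t(f):=\sup_{S\in X}\inf_{z\in S} f(z).$$ Then $$C(r):=\inf_{f\in\mathcal{A}_r} t(f)>-\infty .$$
   Context: $\mathbb{D}_\rho:=\{z\in\mathbb{C}:|z|<\rho\}$ and $\mathbb{D}:=\mathbb{D}_1$. For $0<r<1$, $\mathcal{A}_r$ is the family of continuous nonpositive subharmonic functions $f:\mathbb{D}\to\mathbb{R}$ such that $\sup_{\mathbb{D}_r} f\ge -1$. *)

theory Defs
  imports "HOL-Analysis.Analysis"
begin

text \<open>Subharmonicity on an open set U (Ransford's definition): upper semicontinuity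
  (here implied by continuity, which is assumed separately) together with the local
  submean inequality: every point has a radius below which the value at the point is at
  most the mean over circles.\<close>
definition circle_mean :: "(complex \<Rightarrow> real) \<Rightarrow> complex \<Rightarrow> real \<Rightarrow> real" where
  "circle_mean f z \<rho> = integral {0..2*pi} (\<lambda>t. f (z + complex_of_real \<rho> * cis t)) / (2*pi)"

definition subharmonic_on :: "(complex \<Rightarrow> real) \<Rightarrow> complex set \<Rightarrow> bool" where
  "subharmonic_on f U \<longleftrightarrow>
     (\<forall>z\<in>U. \<exists>\<delta>>0. \<forall>\<rho>. 0 \<le> \<rho> \<and> \<rho> < \<delta> \<longrightarrow> f z \<le> circle_mean f z \<rho>)"

definition A_fam :: "real \<Rightarrow> (complex \<Rightarrow> real) set" where
  "A_fam r = {f. continuous_on (ball 0 1) f \<and> subharmonic_on f (ball 0 1)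
                 \<and> (\<forall>z\<in>ball 0 1. f z \<le> 0) \<and> Sup (f ` ball 0 r) \<ge> -1}"

definition t_val :: "real \<Rightarrow> (complex \<Rightarrow> real) \<Rightarrow> real" where
  "t_val r f = (SUP s\<in>{(1+3*r)/4..(1+r)/2}. INF z\<in>sphere 0 s. f z)"

end

theory Submission
  imports Defs "HOL-Complex_Analysis.Complex_Analysis"
begin


lemma mv_holo:
  assumes holo: "h holomorphic_on cball p \<rho>" and rho: "0 < \<rho>"
  shows "((\<lambda>t. h (p + of_real \<rho> * cis t)) has_integral (of_real (2*pi) * h p)) {0..2*pi}"
proof -
  have "((\<lambda>u. h u/(u-p)) has_contour_integral (2 * of_real pi * \<i> * h p)) (circlepath p \<rho>)"
    by (rule Cauchy_integral_circlepath_simple[OF holo]) (use rho in simp)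
  then have "((\<lambda>t. h (p + \<rho> * cis t) / (p + \<rho> * cis t - p) * \<rho> * \<i> * cis t) has_integral (2 * of_real pi * \<i> * h p)) {0..2*pi}"
    unfolding circlepath_def by (subst (asm) has_contour_integral_part_circlepath_iff) auto
  moreover have "(\<lambda>t. h (p + \<rho> * cis t) / (p + \<rho> * cis t - p) * \<rho> * \<i> * cis t) = (\<lambda>t. \<i> * h (p + \<rho> * cis t))"
    using rho by (intro ext) (simp add: field_simps)
  ultimately have "((\<lambda>t. \<i> * h (p + \<rho> * cis t)) has_integral (2 * of_real pi * \<i> * h p)) {0..2*pi}"
    by simp
  then have "((\<lambda>t. (-\<i>) * (\<i> * h (p + \<rho> * cis t))) has_integral (-\<i>) * (2 * of_real pi * \<i> * h p)) {0..2*pi}"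
    by (rule has_integral_mult_right)
  then show ?thesis by (simp add: algebra_simps)
qed

lemma mv_Re:
  assumes "((\<lambda>t. g t) has_integral I) {0..2*pi}"
  shows "((\<lambda>t. Re (g t)) has_integral Re I) {0..2*pi}"
  using has_integral_linear[OF assms bounded_linear_Re] by (simp add: o_def)

lemma mv_log:
  fixes A B p :: complex
  assumes L: "A*p + B \<noteq> 0" and rho: "0 < \<rho>" and lt: "cmod A * \<rho> < cmod (A*p + B)"
  shows "((\<lambda>t. ln (cmod (A*(p + of_real \<rho> * cis t) + B))) has_integral (2*pi*ln (cmod (A*p+B)))) {0..2*pi}"
proof -
  define L where "L = A*p + B"
  define h where "h u = Ln (1 + (A/L)*(u-p))" for u
  have re: "0 < Re (1 + (A/L)*(u-p))" if "u \<in> cball p \<rho>" for u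
  proof -
    have "cmod ((A/L)*(u-p)) = cmod A * cmod (u - p) / cmod L" by (simp add: norm_mult norm_divide)
    also have "\<dots> \<le> cmod A * \<rho> / cmod L" using that L
      by (intro divide_right_mono mult_left_mono) (auto simp: dist_norm norm_minus_commute L_def)
    also have "\<dots> < 1" using lt L by (simp add: L_def)
    finally have "cmod ((A/L)*(u-p)) < 1" .
    then have "\<bar>Re ((A/L)*(u-p))\<bar> < 1" using abs_Re_le_cmod le_less_trans by blast
    then show ?thesis by simp
  qed
  have holo: "h holomorphic_on cball p \<rho>"
    unfolding h_def
    by (intro holomorphic_intros) (use re in \<open>fastforce simp: complex_nonpos_Reals_iff\<close>)
  have "((\<lambda>t. Re (h (p + of_real \<rho> * cis t))) has_integral Re (of_real (2*pi) * h p)) {0..2*pi}"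
    by (rule mv_Re[OF mv_holo[OF holo rho]])
  moreover have "h p = 0" by (simp add: h_def)
  ultimately have i1: "((\<lambda>t. Re (h (p + of_real \<rho> * cis t))) has_integral 0) {0..2*pi}" by simp
  have i2: "((\<lambda>t. ln (cmod L)) has_integral (2*pi*ln (cmod L))) {0..2*pi}"
    using has_integral_const_real[of "ln (cmod L)" 0 "2*pi"] by simp
  have eq: "ln (cmod (A*(p + of_real \<rho> * cis t) + B)) = Re (h (p + of_real \<rho> * cis t)) + ln (cmod L)" for t
  proof -
    have mem: "p + of_real \<rho> * cis t \<in> cball p \<rho>" using rho by (simp add: dist_norm norm_mult)
    have "0 < Re (1 + (A/L)*(of_real \<rho> * cis t))" using re[OF mem] by simp
    then have nz: "1 + (A/L)*(of_real \<rho> * cis t) \<noteq> 0" by (metis less_irrefl zero_complex.sel(1))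
    have "A*(p + of_real \<rho> * cis t) + B = L * (1 + (A/L)*(of_real \<rho> * cis t))"
      using L by (simp add: L_def field_simps)
    then have "cmod (A*(p + of_real \<rho> * cis t) + B) = cmod L * cmod (1 + (A/L)*(of_real \<rho> * cis t))"
      by (simp add: norm_mult)
    then show ?thesis using nz L by (simp add: h_def ln_mult L_def)
  qed
  show ?thesis using has_integral_add[OF i1 i2] by (simp add: eq L_def)
qed

lemma mv_sq:
  assumes rho: "0 < \<rho>"
  shows "((\<lambda>t. (cmod (p + of_real \<rho> * cis t))^2) has_integral (2*pi*((cmod p)^2 + \<rho>^2))) {0..2*pi}"
proof -
  define h where "h u = 2 * cnj p * u - of_real ((cmod p)^2)" for u
  have holo: "h holomorphic_on cball p \<rho>" unfolding h_def by (intro holomorphic_intros)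
  have i1: "((\<lambda>t. Re (h (p + of_real \<rho> * cis t))) has_integral Re (of_real (2*pi) * h p)) {0..2*pi}"
    by (rule mv_Re[OF mv_holo[OF holo rho]])
  have cp: "(cmod p)^2 = (Re p)^2 + (Im p)^2" by (rule cmod_power2)
  have hp: "Re (of_real (2*pi) * h p) = 2*pi*(cmod p)^2"
  proof -
    have c1: "cnj p * p = of_real ((cmod p)^2)" by (metis complex_norm_square mult.commute)
    have "h p = 2*(cnj p * p) - of_real ((cmod p)^2)" by (simp add: h_def mult.assoc)
    also have "\<dots> = of_real ((cmod p)^2)" unfolding c1 by simp
    finally show ?thesis by simp
  qed
  have i2: "((\<lambda>t. \<rho>^2) has_integral (2*pi*\<rho>^2)) {0..2*pi}"
    using has_integral_const_real[of "\<rho>^2" 0 "2*pi"] by simp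
  have eq: "(cmod (p + of_real \<rho> * cis t))^2 = Re (h (p + of_real \<rho> * cis t)) + \<rho>^2" for t
  proof -
    define u where "u = p + of_real \<rho> * cis t"
    have hu: "Re (h u) = 2*(Re p * Re u + Im p * Im u) - ((Re p)^2 + (Im p)^2)"
      unfolding h_def cp by simp
    have ru: "Re u = Re p + \<rho> * cos t" "Im u = Im p + \<rho> * sin t" by (simp_all add: u_def)
    have cu: "(cmod u)^2 = (Re u)^2 + (Im u)^2" by (rule cmod_power2)
    have sc: "(cos t)^2 + (sin t)^2 = 1" by simp
    have "(cmod u)^2 = Re (h u) + \<rho>^2"
      unfolding cu hu ru
      by (simp add: power2_eq_square algebra_simps) (metis sc power2_eq_square distrib_left mult_1_right)
    then show ?thesis by (simp add: u_def)
  qed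
  have fe: "(\<lambda>t. Re (h (p + of_real \<rho> * cis t)) + \<rho>^2) = (\<lambda>t. (cmod (p + of_real \<rho> * cis t))^2)"
    using eq by auto
  have "((\<lambda>t. Re (h (p + of_real \<rho> * cis t)) + \<rho>^2) has_integral (2*pi*(cmod p)^2 + 2*pi*\<rho>^2)) {0..2*pi}"
    by (rule has_integral_add[OF i1[unfolded hp] i2])
  then show ?thesis unfolding fe by (simp add: distrib_left)
qed



lemma green_identity:
  fixes z w :: complex and c :: real
  shows "(cmod (of_real (c^2) - cnj w * z))^2 = c^2 * (cmod (z - w))^2 + (c^2 - (cmod z)^2) * (c^2 - (cmod w)^2)"
  unfolding cmod_power2 by (simp add: power2_eq_square algebra_simps)

lemma green_zero:
  fixes z w :: complex and c :: real
  assumes "cmod z = c"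
  shows "cmod (of_real (c^2) - cnj w * z) = c * cmod (z - w)"
proof -
  have "of_real (c^2) = z * cnj z" using assms complex_norm_square by metis
  then have e: "of_real (c^2) - cnj w * z = z * cnj (z - w)" by (simp add: algebra_simps)
  have "cmod (z * cnj (z - w)) = cmod z * cmod (z - w)" by (simp only: norm_mult complex_mod_cnj)
  then show ?thesis using assms e by simp
qed

lemma sum_ln_lower: "real N * ln (real N) - real N \<le> (\<Sum>m=1..N. ln (real m))"
proof (induction N)
  case 0 then show ?case by simp
next
  case (Suc N)
  show ?case
  proof (cases "N = 0")
    case True then show ?thesis by simp
  next
    case False
    then have Np: "0 < real N" by simp
    have "ln (1 + 1 / real N) \<le> 1 / real N" by (rule ln_add_one_self_le_self) simp
    then have "real N * ln ((real N + 1) / real N) \<le> 1"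
      using Np by (simp add: field_simps)
    then have "real N * (ln (real N + 1) - ln (real N)) \<le> 1"
      using Np by (simp add: ln_div)
    then have "real (Suc N) * ln (real (Suc N)) - real (Suc N) \<le> real N * ln (real N) - real N + ln (real (Suc N))"
      by (simp add: algebra_simps)
    also have "\<dots> \<le> (\<Sum>m=1..Suc N. ln (real m))" using Suc by simp
    finally show ?thesis .
  qed
qed

lemma sum_ln_ratio: "(\<Sum>m=1..N. ln (real N / real m)) \<le> real N"
proof -
  have "(\<Sum>m=1..N. ln (real N / real m)) = (\<Sum>m=1..N. ln (real N) - ln (real m))"
    by (intro sum.cong refl) (auto simp: ln_div)
  also have "\<dots> = real N * ln (real N) - (\<Sum>m=1..N. ln (real m))"
    by (simp add: sum_subtractf)
  finally show ?thesis using sum_ln_lower[of N] by simp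
qed

lemma sum_ln_ratio_le: "M \<le> N \<Longrightarrow> (\<Sum>m=1..M. ln (real N / real m)) \<le> (\<Sum>m=1..N. ln (real N / real m))"
  by (intro sum_mono2) auto

lemma sum_dist_ln:
  assumes j: "j \<in> {1..N}"
  shows "(\<Sum>k\<in>{1..N}-{j}. ln (real N / \<bar>real k - real j\<bar>)) \<le> 2 * real N"
proof -
  have split: "{1..N}-{j} = {1..<j} \<union> {j<..N}" using j by auto
  have s1: "(\<Sum>k\<in>{1..<j}. ln (real N / \<bar>real k - real j\<bar>)) = (\<Sum>m=1..j-1. ln (real N / real m))"
    by (rule sum.reindex_bij_witness[where i="\<lambda>m. j - m" and j="\<lambda>k. j - k"]) (auto simp: of_nat_diff)
  have s2: "(\<Sum>k\<in>{j<..N}. ln (real N / \<bar>real k - real j\<bar>)) = (\<Sum>m=1..N-j. ln (real N / real m))"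
    by (rule sum.reindex_bij_witness[where i="\<lambda>m. m + j" and j="\<lambda>k. k - j"]) (auto simp: of_nat_diff)
  have "(\<Sum>k\<in>{1..N}-{j}. ln (real N / \<bar>real k - real j\<bar>)) =
        (\<Sum>k\<in>{1..<j}. ln (real N / \<bar>real k - real j\<bar>)) + (\<Sum>k\<in>{j<..N}. ln (real N / \<bar>real k - real j\<bar>))"
    unfolding split by (rule sum.union_disjoint) auto
  also have "\<dots> \<le> real N + real N"
  proof -
    have "(\<Sum>m=1..j-1. ln (real N / real m)) \<le> real N"
      using sum_ln_ratio_le[of "j-1" N] sum_ln_ratio[of N] j by fastforce
    moreover have "(\<Sum>m=1..N-j. ln (real N / real m)) \<le> real N"
      using sum_ln_ratio_le[of "N-j" N] sum_ln_ratio[of N] j by linarith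
    ultimately show ?thesis unfolding s1 s2 by linarith
  qed
  finally show ?thesis by simp
qed



definition Gf :: "real \<Rightarrow> complex \<Rightarrow> complex \<Rightarrow> real" where
  "Gf c z w = ln (cmod (of_real (c^2) - cnj w * z)) - ln c - ln (cmod (z - w))"

lemma X_pos:
  assumes "0 < c" "cmod z \<le> c" "cmod w < c"
  shows "c^2 - cmod w * cmod z \<le> cmod (of_real (c^2) - cnj w * z)" "0 < cmod (of_real (c^2) - cnj w * z)"
proof -
  have "cmod (cnj w * z) = cmod w * cmod z" by (simp add: norm_mult)
  moreover have "cmod (of_real (c^2) :: complex) = c^2" by (simp add: norm_power)
  ultimately show 1: "c^2 - cmod w * cmod z \<le> cmod (of_real (c^2) - cnj w * z)"
    by (metis norm_triangle_ineq2)
  have "cmod w * cmod z \<le> cmod w * c" by (rule mult_left_mono) (use assms in auto)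
  also have "\<dots> < c * c" using assms by (intro mult_strict_right_mono) auto
  finally have "cmod w * cmod z < c * c" .
  then have "0 < c^2 - cmod w * cmod z" by (simp add: power2_eq_square)
  then show "0 < cmod (of_real (c^2) - cnj w * z)" using 1 by linarith
qed

lemma G_zero:
  assumes "0 < c" "cmod z = c" "z \<noteq> w"
  shows "Gf c z w = 0"
  using green_zero[OF assms(2), of w] assms by (simp add: Gf_def ln_mult)

lemma G_upper:
  assumes "0 < c" "c \<le> 1" "cmod z \<le> c" "cmod w < c" "z \<noteq> w"
  shows "Gf c z w \<le> ln 2 - ln (cmod (z - w))"
proof -
  have Xp: "0 < cmod (of_real (c^2) - cnj w * z)" using X_pos assms by blast
  have "cmod (of_real (c^2) - cnj w * z) \<le> cmod (of_real (c^2) :: complex) + cmod (cnj w * z)"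
    by (rule norm_triangle_ineq4)
  also have "\<dots> = c^2 + cmod w * cmod z" by (simp add: norm_mult norm_power)
  also have "\<dots> \<le> c^2 + c * c" using assms by (intro add_left_mono mult_mono) auto
  also have "\<dots> \<le> 2 * c"
  proof -
    have "c * c \<le> 1 * c" using assms by (intro mult_right_mono) auto
    then show ?thesis by (simp add: power2_eq_square)
  qed
  finally have le: "cmod (of_real (c^2) - cnj w * z) \<le> 2 * c" .
  have "ln (cmod (of_real (c^2) - cnj w * z)) \<le> ln (2 * c)"
    by (rule ln_le_cancel_iff[THEN iffD2]) (use Xp assms le in auto)
  then show ?thesis using assms by (simp add: Gf_def ln_mult)
qed

lemma G_lower:
  assumes "0 < c" "c \<le> 1" "cmod z < r" "cmod w \<le> b" "r < c" "b < c" "z \<noteq> w" "0 \<le> r"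
  shows "ln (1 + (c^2 - r^2) * (c^2 - b^2) / 4) / 2 \<le> Gf c z w"
proof -
  define X where "X = cmod (of_real (c^2) - cnj w * z)"
  define Y where "Y = c * cmod (z - w)"
  define d0 where "d0 = (c^2 - r^2) * (c^2 - b^2)"
  have Yp: "0 < Y" using assms by (simp add: Y_def)
  have Xp: "0 < X" unfolding X_def using X_pos[of c z w] assms by auto
  have id: "X^2 = Y^2 + (c^2 - (cmod z)^2) * (c^2 - (cmod w)^2)"
    unfolding X_def Y_def green_identity by (simp add: power_mult_distrib)
  have z2: "(cmod z)^2 \<le> r^2" using assms by (intro power_mono) auto
  have w2: "(cmod w)^2 \<le> b^2" using assms by (intro power_mono) auto
  have r2: "r^2 < c^2" using assms by (intro power_strict_mono) auto
  have b0: "0 \<le> b" using assms(4) norm_ge_zero order_trans by blast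
  have b2: "b^2 < c^2" using assms b0 by (intro power_strict_mono) auto
  have D: "d0 \<le> (c^2 - (cmod z)^2) * (c^2 - (cmod w)^2)"
    unfolding d0_def using z2 w2 r2 b2 by (intro mult_mono) auto
  have d0p: "0 < d0" unfolding d0_def using r2 b2 by simp
  have "cmod (z - w) \<le> cmod z + cmod w" by (rule norm_triangle_ineq4)
  also have "\<dots> \<le> 2" using assms by linarith
  finally have zw2: "cmod (z - w) \<le> 2" .
  have "Y \<le> 1 * 2" unfolding Y_def using assms zw2 by (intro mult_mono) auto
  then have "Y^2 \<le> 2^2" using Yp by (intro power_mono) auto
  then have "Y^2 \<le> 4" by simp
  then have "Y^2 * (d0/4) \<le> d0" using d0p by (simp add: field_simps)
  then have "Y^2 * (1 + d0/4) \<le> X^2" using id D by (simp add: algebra_simps)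
  then have "ln (Y^2 * (1 + d0/4)) \<le> ln (X^2)"
    by (rule ln_le_cancel_iff[THEN iffD2, rotated 2]) (use Yp d0p Xp in auto)
  then have "2 * ln Y + ln (1 + d0/4) \<le> 2 * ln X"
    using Yp Xp d0p by (simp add: ln_mult ln_realpow)
  moreover have "Gf c z w = ln X - ln Y"
    using assms by (simp add: Gf_def X_def Y_def ln_mult)
  ultimately show ?thesis unfolding d0_def by simp
qed



lemma G_mean:
  assumes c: "0 < c" and rho: "0 < \<rho>" and wc: "0 < cmod w" "cmod w < c"
    and pc: "cmod p + \<rho> < c" and pw: "\<rho> < cmod (p - w)"
  shows "((\<lambda>t. Gf c (p + of_real \<rho> * cis t) w) has_integral (2*pi*Gf c p w)) {0..2*pi}"
proof -
  have cp: "cmod p < c" using pc rho by linarith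
  have L1: "0 < cmod ((- cnj w) * p + of_real (c^2))"
    using X_pos(2)[of c p w] c cp wc by (simp add: algebra_simps)
  have "cmod (- cnj w) * \<rho> < cmod ((- cnj w) * p + of_real (c^2))"
  proof -
    have "cmod (- cnj w) * \<rho> = cmod w * \<rho>" by simp
    also have "\<dots> < cmod w * (c - cmod p)" using wc pc by (intro mult_strict_left_mono) auto
    also have "\<dots> \<le> c * (c - cmod p)" using wc cp by (intro mult_right_mono) auto
    also have "\<dots> = c^2 - c * cmod p" by (simp add: power2_eq_square algebra_simps)
    also have "\<dots> \<le> c^2 - cmod w * cmod p" using wc by (intro diff_left_mono mult_right_mono) auto
    also have "\<dots> \<le> cmod (of_real (c^2) - cnj w * p)" using X_pos(1)[of c p w] c cp wc by simp
    finally show ?thesis by (simp add: algebra_simps)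
  qed
  from mv_log[OF _ rho this] L1
  have i1: "((\<lambda>t. ln (cmod ((- cnj w) * (p + of_real \<rho> * cis t) + of_real (c^2)))) has_integral
      (2*pi*ln (cmod ((- cnj w) * p + of_real (c^2))))) {0..2*pi}" by auto
  have L2: "1 * p + (- w) \<noteq> 0" using pw rho by auto
  have "cmod (1::complex) * \<rho> < cmod (1 * p + (- w))" using pw by simp
  from mv_log[OF L2 rho this]
  have i2: "((\<lambda>t. ln (cmod (1 * (p + of_real \<rho> * cis t) + (- w)))) has_integral
      (2*pi*ln (cmod (1 * p + (- w))))) {0..2*pi}" .
  have i3: "((\<lambda>t. ln c) has_integral (2*pi*ln c)) {0..2*pi}"
    using has_integral_const_real[of "ln c" 0 "2*pi"] by simp
  have "((\<lambda>t. ln (cmod ((- cnj w) * (p + of_real \<rho> * cis t) + of_real (c^2))) - ln c - ln (cmod (1 * (p + of_real \<rho> * cis t) + (- w))))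
     has_integral (2*pi*ln (cmod ((- cnj w) * p + of_real (c^2))) - 2*pi*ln c - 2*pi*ln (cmod (1 * p + (- w))))) {0..2*pi}"
    by (intro has_integral_diff i1 i2 i3)
  moreover have "(\<lambda>t. ln (cmod ((- cnj w) * (p + of_real \<rho> * cis t) + of_real (c^2))) - ln c - ln (cmod (1 * (p + of_real \<rho> * cis t) + (- w))))
     = (\<lambda>t. Gf c (p + of_real \<rho> * cis t) w)"
    by (intro ext) (simp add: Gf_def algebra_simps)
  moreover have "2*pi*ln (cmod ((- cnj w) * p + of_real (c^2))) - 2*pi*ln c - 2*pi*ln (cmod (1 * p + (- w))) = 2*pi*Gf c p w"
    by (simp add: Gf_def algebra_simps)
  ultimately show ?thesis by simp
qed

lemma interior_contra:
  fixes f :: "complex \<Rightarrow> real" and w :: "nat \<Rightarrow> complex"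
  assumes cont: "continuous_on (ball 0 1) f" and sub: "subharmonic_on f (ball 0 1)"
    and c: "0 < c" "c < 1" and N: "0 < N"
    and w: "\<forall>k\<in>{1..N}. 0 < cmod (w k) \<and> cmod (w k) < c" and eta: "0 < \<eta>"
    and pc: "cmod p < c" and pw: "\<forall>k\<in>{1..N}. \<eta> < cmod (p - w k)"
    and Phi: "\<And>y. Phi y = f y + \<kappa> * (\<Sum>k\<in>{1..N}. Gf c y (w k)) + (1/2)*(cmod y)^2"
    and max: "\<And>y. cmod y \<le> c \<Longrightarrow> (\<forall>k\<in>{1..N}. \<eta> \<le> cmod (y - w k)) \<Longrightarrow> Phi y \<le> Phi p"
  shows False
proof -
  define \<delta>1 where "\<delta>1 = min (c - cmod p) (Min ((\<lambda>k. cmod (p - w k) - \<eta>) ` {1..N}))"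
  have d1: "0 < \<delta>1" unfolding \<delta>1_def using pc pw N by (auto simp: Min_gr_iff)
  have d1k: "\<delta>1 \<le> cmod (p - w k) - \<eta>" if "k \<in> {1..N}" for k
    unfolding \<delta>1_def using that by (intro min.coboundedI2 Min_le) auto
  have d1c: "\<delta>1 \<le> c - cmod p" unfolding \<delta>1_def by simp
  have pB: "p \<in> ball 0 1" using pc c by simp
  obtain \<delta>2 where d2: "\<delta>2 > 0" "\<forall>\<rho>. 0 \<le> \<rho> \<and> \<rho> < \<delta>2 \<longrightarrow> f p \<le> circle_mean f p \<rho>"
    using sub pB unfolding subharmonic_on_def by blast
  define \<rho> where "\<rho> = min \<delta>1 \<delta>2 / 2"
  have rho: "0 < \<rho>" "\<rho> < \<delta>1" "\<rho> < \<delta>2" using d1 d2 by (auto simp: \<rho>_def)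
  define u where "u t = p + of_real \<rho> * cis t" for t
  have cu: "cmod (u t - p) = \<rho>" for t using rho by (simp add: u_def norm_mult)
  have un: "cmod (u t) \<le> cmod p + \<rho>" for t
    using norm_triangle_ineq[of p "of_real \<rho> * cis t"] rho by (simp add: u_def norm_mult)
  have uc: "cmod (u t) < c" for t using un[of t] rho d1c by linarith
  have uw: "\<eta> \<le> cmod (u t - w k)" if "k \<in> {1..N}" for t k
  proof -
    have "cmod (p - w k) \<le> cmod (u t - w k) + cmod (u t - p)"
      using norm_triangle_ineq[of "u t - w k" "p - u t"] by (simp add: norm_minus_commute)
    then show ?thesis using cu[of t] d1k[OF that] rho by linarith
  qed
  have uB: "u t \<in> ball 0 1" for t using uc[of t] c by simp
  have contu: "continuous_on {0..2*pi} (\<lambda>t. f (u t))"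
  proof (rule continuous_on_compose2[OF cont])
    have "cmod (p + of_real \<rho> * cis t) < 1" for t using uB[of t] by (simp add: u_def)
    then show "u ` {0..2*pi} \<subseteq> ball 0 1" by (auto simp: u_def)
  qed (auto simp: u_def intro!: continuous_intros)
  define If where "If = integral {0..2*pi} (\<lambda>t. f (u t))"
  have i1: "((\<lambda>t. f (u t)) has_integral If) {0..2*pi}"
    unfolding If_def using contu by (intro integrable_integral integrable_continuous_interval)
  have iG: "((\<lambda>t. Gf c (u t) (w k)) has_integral (2*pi*Gf c p (w k))) {0..2*pi}" if "k \<in> {1..N}" for k
    unfolding u_def
  proof (rule G_mean)
    show "cmod p + \<rho> < c" using rho d1c by linarith
    show "\<rho> < cmod (p - w k)" using rho d1k[OF that] eta by linarith
  qed (use c rho w that in auto)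
  have i2: "((\<lambda>t. \<Sum>k\<in>{1..N}. Gf c (u t) (w k)) has_integral (\<Sum>k\<in>{1..N}. 2*pi*Gf c p (w k))) {0..2*pi}"
    by (rule has_integral_sum) (use iG in auto)
  have i3: "((\<lambda>t. (cmod (u t))^2) has_integral (2*pi*((cmod p)^2 + \<rho>^2))) {0..2*pi}"
    unfolding u_def by (rule mv_sq[OF rho(1)])
  have iPhi: "((\<lambda>t. Phi (u t)) has_integral
     (If + \<kappa> * (\<Sum>k\<in>{1..N}. 2*pi*Gf c p (w k)) + (1/2) * (2*pi*((cmod p)^2 + \<rho>^2)))) {0..2*pi}"
    unfolding Phi by (intro has_integral_add i1 has_integral_mult_right i2 i3)
  have iconst: "((\<lambda>t. Phi p) has_integral (2*pi*Phi p)) {0..2*pi}"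
    using has_integral_const_real[of "Phi p" 0 "2*pi"] by simp
  have le: "If + \<kappa> * (\<Sum>k\<in>{1..N}. 2*pi*Gf c p (w k)) + (1/2) * (2*pi*((cmod p)^2 + \<rho>^2)) \<le> 2*pi*Phi p"
  proof (rule has_integral_le[OF iPhi iconst])
    fix t :: real
    show "Phi (u t) \<le> Phi p" by (rule max) (use uc[of t] uw[of _ t] in auto)
  qed
  have "f p \<le> circle_mean f p \<rho>" using d2 rho by auto
  then have "f p \<le> If / (2*pi)" by (simp add: circle_mean_def If_def u_def)
  then have fp: "2*pi * f p \<le> If" by (simp add: field_simps)
  define S where "S = (\<Sum>k\<in>{1..N}. Gf c p (w k))"
  have T: "(\<Sum>k\<in>{1..N}. 2*pi*Gf c p (w k)) = 2*pi*S" by (simp add: S_def sum_distrib_left)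
  have le2: "If + \<kappa> * (2*pi*S) + (1/2) * (2*pi*((cmod p)^2 + \<rho>^2)) \<le> 2*pi*(f p + \<kappa> * S + (1/2)*(cmod p)^2)"
    using le unfolding T Phi S_def by simp
  then have "If + pi * \<rho>^2 \<le> 2*pi*f p" by (simp add: algebra_simps)
  moreover have "0 < pi * \<rho>^2" using rho by simp
  ultimately show False using fp by linarith
qed



lemma nat_dist_ge1: "k \<noteq> (j::nat) \<Longrightarrow> 1 \<le> \<bar>real k - real j\<bar>"
  by (cases "k < j") auto

lemma boundary_sum:
  fixes w :: "nat \<Rightarrow> complex"
  assumes c: "0 < c" "c \<le> 1" and N: "0 < N" and ab: "0 < b - a" "b - a < 1"
    and w: "\<forall>k\<in>{1..N}. cmod (w k) = a + real k * ((b-a)/real N) \<and> cmod (w k) < c"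
    and j: "j \<in> {1..N}" and pj: "cmod (p - w j) = (b-a)/real N/4"
    and pc: "cmod p \<le> c" and pw: "\<forall>k\<in>{1..N}. (b-a)/real N/4 \<le> cmod (p - w k)"
  shows "(\<Sum>k\<in>{1..N}. Gf c p (w k)) \<le> real N * (10 - 2 * ln (b-a))"
proof -
  define hh where "hh = (b-a)/real N"
  define L where "L = - ln (b-a)"
  have hh: "0 < hh" using ab N by (simp add: hh_def)
  have Lpos: "0 < L" using ab by (simp add: L_def)
  have ln2: "ln (2::real) \<le> 1" using ln_le_minus_one[of 2] by simp
  have lnN: "ln (real N) \<le> real N" using N ln_le_minus_one[of "real N"] by simp
  have hh4: "0 < (b-a)/real N/4" using hh by (simp add: hh_def)
  have pwpos: "0 < cmod (p - w k)" if "k \<in> {1..N}" for k using pw that hh4 by (meson less_le_trans)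
  have Gk: "Gf c p (w k) \<le> ln 2 - ln (cmod (p - w k))" if "k \<in> {1..N}" for k
  proof -
    have "cmod (w k) < c" using w that by blast
    then show ?thesis using G_upper[of c p "w k"] c pc pwpos[OF that] by auto
  qed
  have Gj: "Gf c p (w j) \<le> 3 * ln 2 + real N + L"
  proof -
    have "ln (cmod (p - w j)) = ln (b-a) - ln (real N) - ln 4"
      using pj ab N by (simp add: ln_div ln_mult)
    moreover have "ln (4::real) = 2 * ln 2"
      using ln_realpow[of 2 2] by simp
    ultimately show ?thesis using Gk[OF j] lnN by (simp add: L_def)
  qed
  have Gother: "Gf c p (w k) \<le> 2 * ln 2 + L + ln (real N / \<bar>real k - real j\<bar>)"
    if k: "k \<in> {1..N} - {j}" for k
  proof -
    have kk: "k \<in> {1..N}" "k \<noteq> j" using k by auto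
    have d1: "1 \<le> \<bar>real k - real j\<bar>" using nat_dist_ge1[OF kk(2)] .
    have "\<bar>cmod (w j) - cmod (w k)\<bar> \<le> cmod (w j - w k)" by (rule norm_triangle_ineq3)
    moreover have "cmod (w j) - cmod (w k) = (real j - real k) * hh"
    proof -
      have "cmod (w j) = a + real j * hh" "cmod (w k) = a + real k * hh" using w j kk by (auto simp: hh_def)
      then show ?thesis by (simp add: left_diff_distrib)
    qed
    ultimately have "\<bar>real k - real j\<bar> * hh \<le> cmod (w j - w k)"
      using hh by (simp add: abs_mult abs_minus_commute)
    moreover have "cmod (w j - w k) \<le> cmod (p - w k) + cmod (p - w j)"
      using norm_triangle_ineq[of "p - w k" "w j - p"] by (simp add: norm_minus_commute)
    ultimately have "\<bar>real k - real j\<bar> * hh - hh/4 \<le> cmod (p - w k)"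
      using pj by (simp add: hh_def)
    moreover have "\<bar>real k - real j\<bar> * hh / 2 \<le> \<bar>real k - real j\<bar> * hh - hh/4"
      using d1 hh by (simp add: field_simps)
    ultimately have lo: "\<bar>real k - real j\<bar> * hh / 2 \<le> cmod (p - w k)" by linarith
    have dpos: "0 < \<bar>real k - real j\<bar> * hh / 2" using d1 hh by simp
    have "ln (\<bar>real k - real j\<bar> * hh / 2) \<le> ln (cmod (p - w k))"
      by (rule ln_le_cancel_iff[THEN iffD2]) (use lo dpos in auto)
    moreover have "ln (\<bar>real k - real j\<bar> * hh / 2) = ln \<bar>real k - real j\<bar> + ln (b-a) - ln (real N) - ln 2"
      using d1 ab N kk by (simp add: hh_def ln_mult ln_div)
    moreover have "ln (real N / \<bar>real k - real j\<bar>) = ln (real N) - ln \<bar>real k - real j\<bar>"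
      using d1 N by (simp add: ln_div)
    ultimately show ?thesis using Gk[OF kk(1)] by (simp add: L_def)
  qed
  have "(\<Sum>k\<in>{1..N}. Gf c p (w k)) = Gf c p (w j) + (\<Sum>k\<in>{1..N}-{j}. Gf c p (w k))"
    using j by (simp add: sum.remove)
  also have "(\<Sum>k\<in>{1..N}-{j}. Gf c p (w k)) \<le> (\<Sum>k\<in>{1..N}-{j}. (2 * ln 2 + L) + ln (real N / \<bar>real k - real j\<bar>))"
    by (rule sum_mono) (use Gother in auto)
  also have "\<dots> = real (N - 1) * (2 * ln 2 + L) + (\<Sum>k\<in>{1..N}-{j}. ln (real N / \<bar>real k - real j\<bar>))"
    using j by (simp add: sum.distrib)
  also have "\<dots> \<le> real N * (2 + L) + 2 * real N"
  proof -
    have "real (N - 1) * (2 * ln 2 + L) \<le> real N * (2 + L)"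
      using ln2 Lpos by (intro mult_mono) auto
    then show ?thesis using sum_dist_ln[OF j] by linarith
  qed
  finally have "(\<Sum>k\<in>{1..N}. Gf c p (w k)) \<le> 3 * ln 2 + real N + L + (real N * (2 + L) + 2 * real N)"
    using Gj by linarith
  moreover have "L \<le> real N * L" using Lpos N by simp
  moreover have "3 * ln 2 \<le> 3 * real N" using ln2 N by simp
  ultimately show ?thesis unfolding L_def by (simp add: algebra_simps)
qed



lemma key_claim:
  fixes r :: real and f :: "complex \<Rightarrow> real"
  assumes r: "0 < r" "r < 1" and fA: "f \<in> A_fam r"
  defines "a \<equiv> (1+3*r)/4" and "b \<equiv> (1+r)/2"
  defines "c \<equiv> (1+b)/2"
  defines "m \<equiv> ln (1 + (c^2 - r^2) * (c^2 - b^2) / 4) / 2"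
  defines "Cp \<equiv> 3 * (10 - 2 * ln (b-a)) / m"
  shows "\<exists>s\<in>{a..b}. \<forall>z\<in>sphere 0 s. -(Cp+1) \<le> f z"
proof (rule ccontr)
  assume "\<not> ?thesis"
  then have H: "\<forall>s\<in>{a..b}. \<exists>z\<in>sphere 0 s. f z < -(Cp+1)" by (auto simp: not_le)
  have ab: "r < a" "a < b" "b < c" "c < 1" "0 < a" "b - a = (1-r)/4" "c - b = (1-r)/4" "a - r = (1-r)/4"
    using r unfolding a_def b_def c_def by (auto simp: field_simps)
  have cont: "continuous_on (ball 0 1) f" and sub: "subharmonic_on f (ball 0 1)"
    and nonpos: "\<forall>z\<in>ball 0 1. f z \<le> 0" and sup: "-1 \<le> Sup (f ` ball 0 r)"
    using fA by (auto simp: A_fam_def)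
  define K1 where "K1 = 10 - 2 * ln (b-a)"
  have r2: "r^2 < c^2" using ab r by (intro power_strict_mono) auto
  have b2: "b^2 < c^2" using ab r by (intro power_strict_mono) auto
  have mpos: "0 < m" unfolding m_def using r2 b2 by (intro divide_pos_pos ln_gt_zero) auto
  have K1pos: "0 < K1"
  proof -
    have "ln (b-a) < 0" using ab r by (intro ln_less_zero) auto
    then show ?thesis by (simp add: K1_def)
  qed
  have Cp: "Cp = 3 * K1 / m" by (simp add: Cp_def K1_def)
  obtain z0 where z0: "z0 \<in> ball 0 r" "-2 < f z0"
  proof -
    have "\<exists>z\<in>ball 0 r. -2 < f z"
    proof (rule ccontr)
      assume "\<not> ?thesis"
      then have "\<forall>z\<in>ball 0 r. f z \<le> -2" by (auto simp: not_less)
      then have "Sup (f ` ball 0 r) \<le> -2" using r by (intro cSup_least) auto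
      then show False using sup by linarith
    qed
    then show ?thesis using that by blast
  qed
  have "uniformly_continuous_on (cball 0 c) f"
    by (rule compact_uniformly_continuous[OF continuous_on_subset[OF cont]]) (use ab in auto)
  then obtain \<eta>0 where eta0: "\<eta>0 > 0" "\<forall>x\<in>cball 0 c. \<forall>x'\<in>cball 0 c. dist x' x < \<eta>0 \<longrightarrow> dist (f x') (f x) < 1"
    unfolding uniformly_continuous_on_def by (meson zero_less_one)
  obtain N :: nat where N: "(b-a)/\<eta>0 < real N" using reals_Archimedean2 by blast
  have Npos: "0 < N" using N ab eta0 by (metis divide_pos_pos diff_gt_0_iff_gt of_nat_0_less_iff order.strict_trans)
  define hh where "hh = (b-a)/real N"
  define \<eta> where "\<eta> = hh/4"
  have hh: "0 < hh" "hh < \<eta>0" "hh \<le> b - a"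
  proof -
    show "0 < hh" using ab Npos by (simp add: hh_def)
    show "hh < \<eta>0" using N eta0 Npos by (simp add: hh_def field_simps)
    have "1 \<le> real N" using Npos by simp
    then have "(b-a)/real N \<le> (b-a)/1" using ab by (intro divide_left_mono) auto
    then show "hh \<le> b - a" by (simp add: hh_def)
  qed
  have eta: "0 < \<eta>" "\<eta> < \<eta>0" "\<eta> \<le> (1-r)/16" using hh ab by (auto simp: \<eta>_def)
  define s where "s k = a + real k * hh" for k
  have sk: "s k \<in> {a..b}" if "k \<in> {1..N}" for k
  proof -
    have "real k * hh \<le> real N * hh" using that hh by (intro mult_right_mono) auto
    also have "\<dots> = b - a" using Npos by (simp add: hh_def)
    finally show ?thesis using that hh by (auto simp: s_def)
  qed
  have "\<forall>k\<in>{1..N}. \<exists>z. cmod z = s k \<and> f z < -(Cp+1)"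
  proof
    fix k assume "k \<in> {1..N}"
    then obtain z where "z \<in> sphere 0 (s k)" "f z < -(Cp+1)" using H sk by blast
    then show "\<exists>z. cmod z = s k \<and> f z < -(Cp+1)" by auto
  qed
  then obtain w where w: "\<forall>k\<in>{1..N}. cmod (w k) = s k \<and> f (w k) < -(Cp+1)" by metis
  have wn: "a \<le> cmod (w k)" "cmod (w k) \<le> b" if "k \<in> {1..N}" for k using w sk[OF that] that by auto
  have small: "f z < -Cp" "cmod z < c" if j: "j \<in> {1..N}" and zj: "cmod (z - w j) \<le> \<eta>" for j z
  proof -
    have "cmod z \<le> cmod (w j) + cmod (z - w j)" using norm_triangle_ineq[of "w j" "z - w j"] by simp
    then show zc: "cmod z < c" using wn[OF j] zj eta ab by linarith
    have "dist (f z) (f (w j)) < 1"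
      using eta0(2) zc wn[OF j] ab zj eta by (auto simp: dist_norm)
    moreover have "f (w j) < -(Cp+1)" using w j by blast
    ultimately show "f z < -Cp" by (simp add: dist_real_def abs_less_iff)
  qed
  define \<kappa> where "\<kappa> = 3 / (m * real N)"
  define Phi where "Phi z = f z + \<kappa> * (\<Sum>k\<in>{1..N}. Gf c z (w k)) + (1/2)*(cmod z)^2" for z
  define K where "K = cball 0 c \<inter> (\<Inter>k\<in>{1..N}. - ball (w k) \<eta>)"
  have Kmem: "z \<in> K \<longleftrightarrow> cmod z \<le> c \<and> (\<forall>k\<in>{1..N}. \<eta> \<le> cmod (z - w k))" for z
    by (auto simp: K_def dist_norm norm_minus_commute not_less)
  have Kcomp: "compact K" unfolding K_def
    by (intro compact_Int_closed compact_cball closed_INT ballI closed_Compl open_ball)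
  have z0K: "z0 \<in> K"
  proof -
    have "cmod z0 < r" using z0 by simp
    moreover have "\<eta> \<le> cmod (z0 - w k)" if "k \<in> {1..N}" for k
    proof -
      have "cmod (w k) \<le> cmod (z0 - w k) + cmod z0" using norm_triangle_ineq[of "z0 - w k" "- z0"]
        by (simp add: norm_minus_commute)
      then show ?thesis using wn[OF that] \<open>cmod z0 < r\<close> eta ab by linarith
    qed
    ultimately show ?thesis using ab by (auto simp: Kmem)
  qed
  have Kne: "z \<noteq> w k" if "z \<in> K" "k \<in> {1..N}" for z k
  proof -
    have "\<eta> \<le> cmod (z - w k)" using that by (auto simp: Kmem)
    then show ?thesis using eta by auto
  qed
  have wc: "0 < cmod (w k) \<and> cmod (w k) < c" if "k \<in> {1..N}" for k using wn[OF that] ab by linarith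
  have contPhi: "continuous_on K Phi"
    unfolding Phi_def Gf_def
  proof (intro continuous_intros continuous_on_subset[OF cont])
    show "K \<subseteq> ball 0 1" using ab by (auto simp: Kmem)
    show "\<forall>x\<in>K. cmod (of_real (c^2) - cnj (w k) * x) \<noteq> 0" if "k \<in> {1..N}" for k
      using X_pos(2)[of c _ "w k"] wc[OF that] ab by (auto simp: Kmem)
    show "\<forall>x\<in>K. cmod (x - w k) \<noteq> 0" if "k \<in> {1..N}" for k
      using Kne that by auto
  qed
  obtain p where p: "p \<in> K" "\<forall>y\<in>K. Phi y \<le> Phi p"
    using continuous_attains_sup[OF Kcomp _ contPhi] z0K by blast
  have Phiz0: "1 < Phi z0"
  proof -
    have "m \<le> Gf c z0 (w k)" if "k \<in> {1..N}" for k
      unfolding m_def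
      by (rule G_lower) (use ab r z0 wn[OF that] Kne[OF z0K that] in auto)
    then have "real (card {1..N}) * m \<le> (\<Sum>k\<in>{1..N}. Gf c z0 (w k))"
      by (intro sum_bounded_below) auto
    then have "real N * m \<le> (\<Sum>k\<in>{1..N}. Gf c z0 (w k))" by simp
    then have "\<kappa> * (real N * m) \<le> \<kappa> * (\<Sum>k\<in>{1..N}. Gf c z0 (w k))"
      using mpos by (intro mult_left_mono) (auto simp: \<kappa>_def)
    moreover have "\<kappa> * (real N * m) = 3" using mpos Npos by (simp add: \<kappa>_def)
    moreover have "0 \<le> (1/2) * (cmod z0)^2" by simp
    ultimately show ?thesis using z0 unfolding Phi_def by linarith
  qed
  have Phip: "Phi p \<le> 1/2"
  proof (cases "cmod p < c \<and> (\<forall>k\<in>{1..N}. \<eta> < cmod (p - w k))")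
    case True
    have False
    proof (rule interior_contra[OF cont sub _ _ Npos _ eta(1)])
      show "\<forall>k\<in>{1..N}. 0 < cmod (w k) \<and> cmod (w k) < c" using wc by blast
      show "\<And>y. Phi y = f y + \<kappa> * (\<Sum>k\<in>{1..N}. Gf c y (w k)) + (1/2)*(cmod y)^2" by (simp add: Phi_def)
      show "\<And>y. cmod y \<le> c \<Longrightarrow> (\<forall>k\<in>{1..N}. \<eta> \<le> cmod (y - w k)) \<Longrightarrow> Phi y \<le> Phi p"
        using p by (auto simp: Kmem)
    qed (use True ab in auto)
    then show ?thesis ..
  next
    case False
    have pc: "cmod p \<le> c" and pw: "\<forall>k\<in>{1..N}. \<eta> \<le> cmod (p - w k)" using p by (auto simp: Kmem)
    have c2: "(1/2) * (cmod p)^2 \<le> 1/2"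
    proof -
      have "cmod p \<le> 1" using pc ab by linarith
      then have "(cmod p)^2 \<le> 1" by (simp add: power_le_one)
      then show ?thesis by simp
    qed
    show ?thesis
    proof (cases "cmod p = c")
      case True
      have "Gf c p (w k) = 0" if "k \<in> {1..N}" for k
        by (rule G_zero) (use True ab Kne[OF p(1) that] in auto)
      then have "(\<Sum>k\<in>{1..N}. Gf c p (w k)) = 0" by simp
      moreover have "f p \<le> 0" using nonpos pc ab by auto
      ultimately show ?thesis using c2 by (simp add: Phi_def)
    next
      case cne: False
      then obtain j where j: "j \<in> {1..N}" "cmod (p - w j) \<le> \<eta>" using False pc by force
      have pj: "cmod (p - w j) = (b-a)/real N/4" using j pw by (force simp: \<eta>_def hh_def)
      have "(\<Sum>k\<in>{1..N}. Gf c p (w k)) \<le> real N * (10 - 2 * ln (b-a))"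
      proof (rule boundary_sum[where c=c and N=N and a=a and b=b and w=w and j=j and p=p])
        show "\<forall>k\<in>{1..N}. cmod (w k) = a + real k * ((b-a)/real N) \<and> cmod (w k) < c"
          using w wc by (auto simp: s_def hh_def)
        show "\<forall>k\<in>{1..N}. (b-a)/real N/4 \<le> cmod (p - w k)" using pw by (simp add: \<eta>_def hh_def)
      qed (use ab r Npos j pj pc in auto)
      then have "\<kappa> * (\<Sum>k\<in>{1..N}. Gf c p (w k)) \<le> \<kappa> * (real N * K1)"
        using mpos by (intro mult_left_mono) (auto simp: \<kappa>_def K1_def)
      moreover have "\<kappa> * (real N * K1) = Cp" using mpos Npos by (simp add: \<kappa>_def Cp)
      moreover have "f p < -Cp" using small[OF j] by simp
      ultimately show ?thesis using c2 by (simp add: Phi_def)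
    qed
  qed
  have "Phi z0 \<le> Phi p" using p z0K by blast
  then show False using Phiz0 Phip by linarith
qed


theorem lemma2p3:
  fixes r :: real
  assumes "0 < r" "r < 1"
  shows "\<exists>C::real. \<forall>f\<in>A_fam r. C \<le> t_val r f"
proof -
  define a where "a = (1+3*r)/4"
  define b where "b = (1+r)/2"
  define c where "c = (1+b)/2"
  define m where "m = ln (1 + (c^2 - r^2) * (c^2 - b^2) / 4) / 2"
  define Cp where "Cp = 3 * (10 - 2 * ln (b-a)) / m"
  have ab: "0 < a" "a \<le> b" "b < 1" using assms by (auto simp: a_def b_def)
  show ?thesis
  proof (intro exI ballI)
    fix f assume fA: "f \<in> A_fam r"
    obtain s where s: "s \<in> {a..b}" "\<forall>z\<in>sphere 0 s. -(Cp+1) \<le> f z"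
      using key_claim[OF assms fA] unfolding a_def b_def c_def m_def Cp_def by blast
    have cont: "continuous_on (ball 0 1) f" and nonpos: "\<forall>z\<in>ball 0 1. f z \<le> 0"
      using fA by (auto simp: A_fam_def)
    have bdd: "bdd_below (f ` sphere 0 s')" if "s' \<in> {a..b}" for s'
    proof -
      have "sphere 0 s' \<subseteq> ball 0 1" using that ab by auto
      then have "compact (f ` sphere 0 s')"
        by (intro compact_continuous_image continuous_on_subset[OF cont]) auto
      then show ?thesis by (simp add: bounded_imp_bdd_below compact_imp_bounded)
    qed
    have mem: "complex_of_real s' \<in> sphere 0 s'" if "s' \<in> {a..b}" for s'
      using that ab by auto
    have le0: "(INF z\<in>sphere 0 s'. f z) \<le> 0" if "s' \<in> {a..b}" for s'
    proof -
      have "(INF z\<in>sphere 0 s'. f z) \<le> f (complex_of_real s')"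
        by (rule cINF_lower[OF bdd[OF that] mem[OF that]])
      also have "\<dots> \<le> 0" using nonpos that ab by auto
      finally show ?thesis .
    qed
    have bddA: "bdd_above ((\<lambda>s'. INF z\<in>sphere 0 s'. f z) ` {a..b})"
      using le0 by (intro bdd_aboveI2) auto
    have "-(Cp+1) \<le> (INF z\<in>sphere 0 s. f z)"
      by (rule cINF_greatest) (use s mem ab in auto)
    then have "-(Cp+1) \<le> (SUP s'\<in>{a..b}. INF z\<in>sphere 0 s'. f z)"
      by (rule cSUP_upper2[OF bddA s(1)])
    then show "-(Cp+1) \<le> t_val r f" unfolding t_val_def a_def b_def .
  qed
qed

end
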